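(* For $a\in\mathbb{R}$ let $(g_1,g_3)$ be the maximal solution of \[ \dot g_1=\frac{a^2+g_3^2}{g_1g_3},\qquad \dot g_3=\frac{a^2-g_3^2}{g_1^2},\qquad g_1(0)=g_3(0)=1 \] (the reduced left-invariant generalized Ricci flow on the Heisenberg group $H_3$ starting from the standard metric and $H_0=a\,e^{123}$). Its maximal interval of existence is of the form $(T_{\min}(a),\infty)$ with $T_{\min}(a)<0$, where $T_{\min}$ is an even function of $a$ with $T_{\min}(0)=-\tfrac13$, and \[ \lim_{t\to T_{\min}(a)^+}g_1(t)=0,\qquad \lim_{t\to T_{\min}(a)^+}g_3(t)=\begin{cases}\infty,&|a|<1,\\ 1,&a=\pm1,\\ 0,&|a|>1.\end{cases} \]
   Context: The system arises from the gauge-fixed generalized Ricci flow $\dot g=-2\mathrm{Rc}_g+\tfrac12H\circ_gH$, $\dot H=-\Delta_gH$ on left-invariant data on the Heisenberg group, with metric $g(t)=g_1(t)(e^1\otimes e^1+e^2\otimes e^2)+g_3(t)e^3\otimes e^3$, $[e_1,e_2]=e_3$, and $H(t)\equiv a\,e^{123}$. *)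

theory Defs
  imports "HOL-Analysis.Analysis"
begin

definition hsol :: "real \<Rightarrow> (real \<Rightarrow> real) \<Rightarrow> (real \<Rightarrow> real) \<Rightarrow> real set \<Rightarrow> bool" where
  "hsol a g1 g3 I \<longleftrightarrow>
     open I \<and> is_interval I \<and> 0 \<in> I \<and> g1 0 = 1 \<and> g3 0 = 1 \<and>
     (\<forall>t\<in>I. g1 t \<noteq> 0 \<and> g3 t \<noteq> 0 \<and>
        (g1 has_real_derivative (a\<^sup>2 + (g3 t)\<^sup>2) / (g1 t * g3 t)) (at t) \<and>
        (g3 has_real_derivative (a\<^sup>2 - (g3 t)\<^sup>2) / (g1 t)\<^sup>2) (at t))"

definition hmaxsol :: "real \<Rightarrow> (real \<Rightarrow> real) \<Rightarrow> (real \<Rightarrow> real) \<Rightarrow> real set \<Rightarrow> bool" where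
  "hmaxsol a g1 g3 I \<longleftrightarrow> hsol a g1 g3 I \<and>
     (\<forall>h1 h3 J. hsol a h1 h3 J \<and> I \<subseteq> J \<and> (\<forall>t\<in>I. h1 t = g1 t \<and> h3 t = g3 t) \<longrightarrow> J = I)"

end

theory Submission
  imports Defs "HOL-Real_Asymp.Real_Asymp"
begin


lemma hsol_cont:
  assumes "hsol a g1 g3 I"
  shows "continuous_on I g1" "continuous_on I g3"
proof -
  have d: "\<forall>t\<in>I. (g1 has_real_derivative (a\<^sup>2 + (g3 t)\<^sup>2) / (g1 t * g3 t)) (at t) \<and>
        (g3 has_real_derivative (a\<^sup>2 - (g3 t)\<^sup>2) / (g1 t)\<^sup>2) (at t)"
    using assms unfolding hsol_def by blast
  show "continuous_on I g1"
    by (rule continuous_at_imp_continuous_on) (use d DERIV_isCont in blast)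
  show "continuous_on I g3"
    by (rule continuous_at_imp_continuous_on) (use d DERIV_isCont in blast)
qed

lemma pos_on_interval:
  fixes g :: "real \<Rightarrow> real"
  assumes "is_interval I" "0 \<in> I" "continuous_on I g" "g 0 = 1" "\<And>t. t \<in> I \<Longrightarrow> g t \<noteq> 0" "t \<in> I"
  shows "g t > 0"
proof (rule ccontr)
  assume "\<not> g t > 0"
  then have "g t < 0" using assms(5,6) by force
  have "connected (g ` I)"
    using assms(1,3) connected_continuous_image is_interval_connected_1 by blast
  then have c: "\<forall>x\<in>g ` I. \<forall>y\<in>g ` I. \<forall>z. x \<le> z \<longrightarrow> z \<le> y \<longrightarrow> z \<in> g ` I"
    by (simp only: connected_iff_interval)
  have gt: "g t \<in> g ` I" and g0: "g 0 \<in> g ` I" using assms(2,6) by auto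
  have "0 \<in> g ` I"
    by (rule c[rule_format, OF gt g0]) (use \<open>g t < 0\<close> assms(4) in auto)
  then show False using assms(5) by auto
qed

lemma hsol_pos:
  assumes "hsol a g1 g3 I" "t \<in> I"
  shows "g1 t > 0" "g3 t > 0"
proof -
  have h: "is_interval I" "0 \<in> I" "g1 0 = 1" "g3 0 = 1" "\<And>t. t \<in> I \<Longrightarrow> g1 t \<noteq> 0" "\<And>t. t \<in> I \<Longrightarrow> g3 t \<noteq> 0"
    using assms(1) unfolding hsol_def by auto
  show "g1 t > 0" by (rule pos_on_interval[OF h(1,2) hsol_cont(1)[OF assms(1)] h(3) h(5) assms(2)])
  show "g3 t > 0" by (rule pos_on_interval[OF h(1,2) hsol_cont(2)[OF assms(1)] h(4) h(6) assms(2)])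
qed

lemma alg_R: fixes x y a2 :: real assumes "x \<noteq> 0" "y \<noteq> 0" shows "(((a2 + y^2) / (x*y) * (a2 - y^2) + (0 - real 2 * ((a2 - y^2)/x^2 * y ^ (2 - Suc 0))) * x) * y - x * (a2 - y^2) * ((a2 - y^2)/x^2)) / (y*y) = 0"
proof -
  have "((a2 + y^2) / (x*y) * (a2 - y^2) + (0 - real 2 * ((a2 - y^2)/x^2 * y ^ (2 - Suc 0))) * x) * y - x * (a2 - y^2) * ((a2 - y^2)/x^2)
    = ((a2 + y^2) * (a2 - y^2) - 2 * (a2 - y^2) * y^2 - (a2 - y^2)^2) / x"
    using assms by (simp add: field_simps power2_eq_square)
  also have "... = 0" by (simp add: power2_eq_square algebra_simps)
  finally show ?thesis by simp
qed

lemma R_deriv: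
  fixes h1 h3 :: "real \<Rightarrow> real"
  assumes x: "h1 t \<noteq> 0" and y: "h3 t \<noteq> 0"
    and d1: "(h1 has_real_derivative (a2 + (h3 t)^2) / (h1 t * h3 t)) (at t)"
    and d3: "(h3 has_real_derivative (a2 - (h3 t)^2) / (h1 t)^2) (at t)"
  shows "((\<lambda>t. h1 t * (a2 - (h3 t)^2) / h3 t) has_real_derivative 0) (at t)"
  apply (rule d1 d3 derivative_eq_intros refl)+
  using x y apply simp
  apply (rule alg_R[OF x y])
  done

lemma R_const:
  assumes "hsol a g1 g3 I" "t \<in> I"
  shows "g1 t * (a^2 - (g3 t)^2) / g3 t = a^2 - 1"
proof -
  have I: "convex I" "0 \<in> I" using assms(1) is_interval_convex unfolding hsol_def by auto
  have "\<exists>c. \<forall>x\<in>I. g1 x * (a^2 - (g3 x)^2) / g3 x = c"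
  proof (rule has_field_derivative_zero_constant[OF I(1)])
    fix x assume x: "x \<in> I"
    have hx: "g1 x \<noteq> 0" "g3 x \<noteq> 0" "(g1 has_real_derivative (a\<^sup>2 + (g3 x)\<^sup>2) / (g1 x * g3 x)) (at x)"
        "(g3 has_real_derivative (a\<^sup>2 - (g3 x)\<^sup>2) / (g1 x)\<^sup>2) (at x)"
      using assms(1) x unfolding hsol_def by blast+
    show "((\<lambda>t. g1 t * (a^2 - (g3 t)^2) / g3 t) has_real_derivative 0) (at x within I)"
      by (rule has_field_derivative_at_within[OF R_deriv[OF hx]])
  qed
  then obtain c where c: "\<And>x. x \<in> I \<Longrightarrow> g1 x * (a^2 - (g3 x)^2) / g3 x = c" by blast
  have "g1 0 = 1" "g3 0 = 1" using assms(1) unfolding hsol_def by blast+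
  then have "c = a^2 - 1" using c[OF I(2)] by simp
  then show ?thesis using c[OF assms(2)] by simp
qed

lemma assemble:
  assumes ex: "hsol a G1 G3 {T<..}"
    and uniq: "\<And>g1 g3 I. hsol a g1 g3 I \<Longrightarrow> I \<subseteq> {T<..} \<and> (\<forall>t\<in>I. g1 t = G1 t \<and> g3 t = G3 t)"
  shows "hmaxsol a G1 G3 {T<..}"
    and "\<And>g1 g3 I. hmaxsol a g1 g3 I \<Longrightarrow> I = {T<..} \<and> (\<forall>t\<in>I. g1 t = G1 t \<and> g3 t = G3 t)"
proof -
  show "hmaxsol a G1 G3 {T<..}"
    unfolding hmaxsol_def
  proof (intro conjI allI impI ex)
    fix h1 h3 J assume "hsol a h1 h3 J \<and> {T<..} \<subseteq> J \<and> (\<forall>t\<in>{T<..}. h1 t = G1 t \<and> h3 t = G3 t)"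
    then show "J = {T<..}" using uniq by blast
  qed
next
  fix g1 g3 I assume m: "hmaxsol a g1 g3 I"
  then have h: "hsol a g1 g3 I" unfolding hmaxsol_def by blast
  have u: "I \<subseteq> {T<..}" "\<forall>t\<in>I. g1 t = G1 t \<and> g3 t = G3 t" using uniq[OF h] by auto
  have mx: "\<And>h1 h3 J. hsol a h1 h3 J \<and> I \<subseteq> J \<and> (\<forall>t\<in>I. h1 t = g1 t \<and> h3 t = g3 t) \<Longrightarrow> J = I"
    using m unfolding hmaxsol_def by blast
  have "{T<..} = I"
    by (rule mx) (use ex u in auto)
  then show "I = {T<..} \<and> (\<forall>t\<in>I. g1 t = G1 t \<and> g3 t = G3 t)" using u by auto
qed

lemma ev_right: "eventually (\<lambda>t. t \<in> {T<..}) (at_right (T::real))"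
  using eventually_at_right_less[of T] by simp


lemma is_interval_Ioi': "is_interval {T::real<..}"
  unfolding is_interval_1 by auto

lemma case_one_ex:
  assumes a: "a^2 = 1"
  shows "hsol a (\<lambda>t. sqrt (1 + 4 * t)) (\<lambda>t. 1) {- 1 / 4<..}"
  unfolding hsol_def
proof (intro conjI ballI)
  show "open {(- 1 / 4::real)<..}" by simp
  show "is_interval {(- 1 / 4::real)<..}" by (rule is_interval_Ioi')
  show "0 \<in> {(- 1 / 4::real)<..}" by simp
  show "sqrt (1 + 4 * 0) = (1::real)" by simp
  show "(1::real) = 1" by simp
  fix t :: real assume t: "t \<in> {- 1 / 4<..}"
  then have p: "1 + 4 * t > 0" by simp
  then have sp: "sqrt (1 + 4 * t) > 0" by simp
  show "sqrt (1 + 4 * t) \<noteq> 0" using sp by simp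
  show "(1::real) \<noteq> 0" by simp
  have dl: "((\<lambda>t. 1 + 4 * t) has_real_derivative 4) (at t)"
    using DERIV_add[OF DERIV_const DERIV_cmult[OF DERIV_ident, of 4], of 1 t] by simp
  have "((\<lambda>t. sqrt (1 + 4 * t)) has_real_derivative inverse (sqrt (1 + 4 * t)) / 2 * 4) (at t)"
    by (rule DERIV_chain2[OF DERIV_real_sqrt[OF p] dl])
  moreover have "inverse (sqrt (1 + 4 * t)) / 2 * 4 = (a\<^sup>2 + 1\<^sup>2) / (sqrt (1 + 4 * t) * 1)"
    using a sp by (simp add: field_simps)
  ultimately show "((\<lambda>t. sqrt (1 + 4 * t)) has_real_derivative (a\<^sup>2 + 1\<^sup>2) / (sqrt (1 + 4 * t) * 1)) (at t)"
    by simp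
  show "((\<lambda>t. 1) has_real_derivative (a\<^sup>2 - 1\<^sup>2) / (sqrt (1 + 4 * t))\<^sup>2) (at t)"
    using a by simp
qed

lemma sq_deriv_const:
  fixes h :: "real \<Rightarrow> real"
  assumes x: "h t \<noteq> 0" and d: "(h has_real_derivative 2 / h t) (at t)"
  shows "((\<lambda>t. (h t)^2 - 4 * t) has_real_derivative 0) (at t)"
proof -
  have "((\<lambda>t. (h t)^2 - 4 * t) has_real_derivative 2 * h t * (2 / h t) - 4) (at t)"
    using DERIV_diff[OF DERIV_power[OF d, of 2] DERIV_cmult[OF DERIV_ident, of 4]] x by simp
  moreover have "2 * h t * (2 / h t) - 4 = 0" using x by simp
  ultimately show ?thesis by simp
qed

lemma case_one_uniq:
  assumes a: "a^2 = 1" and h: "hsol a g1 g3 I"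
  shows "I \<subseteq> {- 1 / 4<..} \<and> (\<forall>t\<in>I. g1 t = sqrt (1 + 4 * t) \<and> g3 t = 1)"
proof -
  have g3: "g3 t = 1" if t: "t \<in> I" for t
  proof -
    have "g1 t * (a^2 - (g3 t)^2) / g3 t = 0" using R_const[OF h t] a by simp
    then have "(g3 t)^2 = 1" using hsol_pos[OF h t] a by simp
    then show ?thesis using hsol_pos[OF h t] by (simp add: power2_eq_1_iff)
  qed
  have I: "convex I" "0 \<in> I" using h is_interval_convex unfolding hsol_def by auto
  have "\<exists>c. \<forall>x\<in>I. (g1 x)^2 - 4 * x = c"
  proof (rule has_field_derivative_zero_constant[OF I(1)])
    fix x assume x: "x \<in> I"
    have hx: "g1 x \<noteq> 0" "(g1 has_real_derivative (a\<^sup>2 + (g3 x)\<^sup>2) / (g1 x * g3 x)) (at x)"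
      using h x unfolding hsol_def by blast+
    have "(a\<^sup>2 + (g3 x)\<^sup>2) / (g1 x * g3 x) = 2 / g1 x" using a g3[OF x] by simp
    with hx have "(g1 has_real_derivative 2 / g1 x) (at x)" by simp
    then show "((\<lambda>t. (g1 t)^2 - 4 * t) has_real_derivative 0) (at x within I)"
      using sq_deriv_const[of g1 x] hx(1) by (blast intro: has_field_derivative_at_within)
  qed
  then obtain c where c: "\<And>x. x \<in> I \<Longrightarrow> (g1 x)^2 - 4 * x = c" by blast
  have "g1 0 = 1" using h unfolding hsol_def by blast
  then have c1: "c = 1" using c[OF I(2)] by simp
  have "t \<in> {- 1 / 4<..} \<and> g1 t = sqrt (1 + 4 * t) \<and> g3 t = 1" if t: "t \<in> I" for t
  proof -
    have e: "(g1 t)^2 = 1 + 4 * t" using c[OF t] c1 by simp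
    have p: "g1 t > 0" using hsol_pos[OF h t] by simp
    then have "(g1 t)^2 > 0" by simp
    then have "t > - 1 / 4" using e by simp
    moreover have "g1 t = sqrt (1 + 4 * t)" using e p by (metis abs_of_pos real_sqrt_abs)
    ultimately show ?thesis using g3[OF t] by simp
  qed
  then show ?thesis by blast
qed


definition Dom :: "real \<Rightarrow> real set" where
  "Dom a = {x. 0 < x \<and> 0 < (a^2 - x^2) * (a^2 - 1)}"

lemma sq_less_iff_pos: fixes a x :: real assumes "x > 0" shows "a^2 < x^2 \<longleftrightarrow> \<bar>a\<bar> < x"
proof -
  have "a^2 < x^2 \<longleftrightarrow> \<not> x^2 \<le> a^2" by auto
  also have "... \<longleftrightarrow> \<not> \<bar>x\<bar> \<le> \<bar>a\<bar>" using abs_le_square_iff[of x a] by simp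
  also have "... \<longleftrightarrow> \<bar>a\<bar> < x" using assms by auto
  finally show ?thesis .
qed

lemma Dom_lt: assumes "a^2 < 1" shows "Dom a = {\<bar>a\<bar><..}"
proof -
  have "x \<in> Dom a \<longleftrightarrow> \<bar>a\<bar> < x" for x
  proof
    assume "x \<in> Dom a"
    then have x: "x > 0" "0 < (a^2 - x^2) * (a^2 - 1)" unfolding Dom_def by auto
    then have "a^2 < x^2" using assms by (simp add: zero_less_mult_iff)
    then show "\<bar>a\<bar> < x" using sq_less_iff_pos[OF x(1)] by simp
  next
    assume h: "\<bar>a\<bar> < x"
    then have x: "x > 0" by linarith
    then have "a^2 < x^2" using sq_less_iff_pos[OF x] h by simp
    then show "x \<in> Dom a" unfolding Dom_def using x assms by (simp add: mult_neg_neg)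
  qed
  then show ?thesis by (intro set_eqI) simp
qed

lemma Dom_gt: assumes "a^2 > 1" shows "Dom a = {0<..<\<bar>a\<bar>}"
proof -
  have "x \<in> Dom a \<longleftrightarrow> 0 < x \<and> x < \<bar>a\<bar>" for x
  proof
    assume "x \<in> Dom a"
    then have x: "x > 0" "0 < (a^2 - x^2) * (a^2 - 1)" unfolding Dom_def by auto
    then have "x^2 < a^2" using assms by (simp add: zero_less_mult_iff)
    then have "\<not> \<bar>a\<bar> \<le> \<bar>x\<bar>" using abs_le_square_iff[of a x] by simp
    then show "0 < x \<and> x < \<bar>a\<bar>" using x(1) by simp
  next
    assume h: "0 < x \<and> x < \<bar>a\<bar>"
    then have "\<not> \<bar>a\<bar> \<le> \<bar>x\<bar>" by simp
    then have "x^2 < a^2" using abs_le_square_iff[of a x] by simp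
    then show "x \<in> Dom a" unfolding Dom_def using h assms by simp
  qed
  then show ?thesis by (intro set_eqI) simp
qed

lemma Dom_pos: "x \<in> Dom a \<Longrightarrow> x > 0" unfolding Dom_def by auto
lemma Dom_ne: "x \<in> Dom a \<Longrightarrow> a^2 - x^2 \<noteq> 0" unfolding Dom_def by auto
lemma Dom_one: assumes "a^2 \<noteq> 1" shows "1 \<in> Dom a"
proof -
  have "a^2 - 1 \<noteq> 0" using assms by simp
  then have "0 < (a^2 - 1) * (a^2 - 1)" using not_real_square_gt_zero by blast
  then show ?thesis unfolding Dom_def by simp
qed
lemma Dom_open: "a^2 \<noteq> 1 \<Longrightarrow> open (Dom a)"
  by (cases "a^2 < 1") (auto simp: Dom_lt Dom_gt)

lemma inv_deriv:
  fixes f g :: "real \<Rightarrow> real"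
  shows "\<lbrakk>DERIV f (g y) :> f'; f' \<noteq> 0; open S; continuous_on S f; g y \<in> S; f(g y) = y;
           \<And>z. z \<in> S \<Longrightarrow> g (f z) = z\<rbrakk>
          \<Longrightarrow> DERIV g y :> inverse (f')"
  unfolding has_field_derivative_def
  by (rule has_derivative_inverse_strong_x [of S g y f]) auto

lemma alg_G3: fixes k y w :: real assumes "k \<noteq> 0" "y \<noteq> 0" "w \<noteq> 0"
  shows "inverse (k^2 * y^2 / w^3) = w / (k * y / w)^2"
  using assms by (simp add: field_simps power2_eq_square power3_eq_cube)

lemma alg_chain: fixes k y w x :: real assumes "k \<noteq> 0" "y \<noteq> 0" "w \<noteq> 0" "x = k * y / w"
  shows "k^2 * y^2 / w^3 * (w / x^2) = 1"
  using assms by (simp add: field_simps power2_eq_square power3_eq_cube)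

lemma alg_G1: fixes k y a2 :: real assumes "k \<noteq> 0" "y \<noteq> 0" "a2 - y^2 \<noteq> 0"
  shows "(k * ((a2 - y^2) / (k * y / (a2 - y^2))^2) * (a2 - y^2) - k * y * (- (2 * y * ((a2 - y^2) / (k * y / (a2 - y^2))^2))))
      / ((a2 - y^2) * (a2 - y^2)) = (a2 + y^2) / ((k * y / (a2 - y^2)) * y)"
proof -
  obtain w where w: "w = a2 - y^2" by blast
  have w0: "w \<noteq> 0" using w assms by simp
  have a2: "a2 = w + y^2" using w by simp
  show ?thesis unfolding w[symmetric] unfolding a2 using assms(1,2) w0
    by (simp add: field_simps power2_eq_square)
qed

lemma G1_deriv:
  fixes h :: "real \<Rightarrow> real"
  assumes y: "h t \<noteq> 0" and w: "a2 - (h t)^2 \<noteq> 0" and k: "k \<noteq> 0"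
    and d: "(h has_real_derivative (a2 - (h t)^2) / (k * h t / (a2 - (h t)^2))^2) (at t)"
  shows "((\<lambda>t. k * h t / (a2 - (h t)^2)) has_real_derivative (a2 + (h t)^2) / ((k * h t / (a2 - (h t)^2)) * h t)) (at t)"
proof -
  let ?D = "(a2 - (h t)^2) / (k * h t / (a2 - (h t)^2))^2"
  have dn: "((\<lambda>t. k * h t) has_real_derivative k * ?D) (at t)" by (rule DERIV_cmult[OF d])
  have dd: "((\<lambda>t. a2 - (h t)^2) has_real_derivative - (2 * h t * ?D)) (at t)"
  proof -
    have e: "0 - real 2 * (?D * (h t)^(2 - Suc 0)) = - (2 * h t * ?D)" by simp
    show ?thesis using DERIV_diff[OF DERIV_const DERIV_power[OF d, of 2], of a2] unfolding e .
  qed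
  have "((\<lambda>t. k * h t / (a2 - (h t)^2)) has_real_derivative
     (k * ?D * (a2 - (h t)^2) - k * h t * (- (2 * h t * ?D))) / ((a2 - (h t)^2) * (a2 - (h t)^2))) (at t)"
    by (rule DERIV_divide[OF dn dd w])
  then show ?thesis unfolding alg_G1[OF k y w] .
qed


lemma alg_solve: fixes x y w k :: real assumes "y \<noteq> 0" "w \<noteq> 0" "x * w / y = k" shows "x = k * y / w"
  using assms by (auto simp: field_simps)

lemma alg_pos: fixes x y w k :: real assumes "x > 0" "y > 0" "w \<noteq> 0" "x * w / y = k" shows "0 < w * k"
proof -
  have "w * k = x * (w * w) / y" using assms(4) by (auto simp: field_simps)
  moreover have "w * w > 0" using assms(3) not_real_square_gt_zero by blast
  ultimately show ?thesis using assms(1,2) by simp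
qed


context
  fixes a T :: real and Phi :: "real \<Rightarrow> real"
  assumes a1: "a^2 \<noteq> 1"
    and dPhi: "\<And>x. x \<in> Dom a \<Longrightarrow> (Phi has_real_derivative (a^2 - 1)^2 * x^2 / (a^2 - x^2)^3) (at x)"
    and P1: "Phi 1 = 0"
    and Pgt: "\<And>x. x \<in> Dom a \<Longrightarrow> Phi x > T"
    and Plow: "\<And>t. t > T \<Longrightarrow> \<exists>x\<in>Dom a. Phi x < t"
    and Phigh: "\<And>t. \<exists>x\<in>Dom a. Phi x > t"
begin

lemma k0: "a^2 - 1 \<noteq> 0" using a1 by simp

lemma F_sign_lt:
  assumes "a^2 < 1" "x \<in> Dom a"
  shows "(a^2 - 1)^2 * x^2 / (a^2 - x^2)^3 < 0"
proof -
  have h: "0 < (a^2 - x^2) * (a^2 - 1)" using assms(2) unfolding Dom_def by auto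
  have "a^2 - x^2 < 0" using h assms(1) by (simp add: zero_less_mult_iff)
  then have "(a^2 - x^2)^3 < 0" by (simp add: power_less_zero_eq)
  moreover have "(a^2 - 1)^2 * x^2 > 0" using k0 Dom_pos[OF assms(2)] by simp
  ultimately show ?thesis by (simp add: divide_pos_neg)
qed

lemma F_sign_gt:
  assumes "a^2 > 1" "x \<in> Dom a"
  shows "(a^2 - 1)^2 * x^2 / (a^2 - x^2)^3 > 0"
proof -
  have h: "0 < (a^2 - x^2) * (a^2 - 1)" using assms(2) unfolding Dom_def by auto
  have "a^2 - x^2 > 0" using h assms(1) by (simp add: zero_less_mult_iff)
  then have "(a^2 - x^2)^3 > 0" by simp
  moreover have "(a^2 - 1)^2 * x^2 > 0" using k0 Dom_pos[OF assms(2)] by simp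
  ultimately show ?thesis by simp
qed

lemma Phi_dec:
  assumes "a^2 < 1" "x \<in> Dom a" "y \<in> Dom a" "x < y"
  shows "Phi y < Phi x"
proof (rule DERIV_neg_imp_decreasing[OF assms(4)])
  fix z assume z: "x \<le> z" "z \<le> y"
  have zD: "z \<in> Dom a" using assms z unfolding Dom_lt[OF assms(1)] by auto
  show "\<exists>d. DERIV Phi z :> d \<and> d < 0" by (intro exI conjI) (rule dPhi[OF zD], rule F_sign_lt[OF assms(1) zD])
qed

lemma Phi_inc:
  assumes "a^2 > 1" "x \<in> Dom a" "y \<in> Dom a" "x < y"
  shows "Phi x < Phi y"
proof (rule DERIV_pos_imp_increasing[OF assms(4)])
  fix z assume z: "x \<le> z" "z \<le> y"
  have zD: "z \<in> Dom a" using assms z unfolding Dom_gt[OF assms(1)] by auto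
  show "\<exists>d. DERIV Phi z :> d \<and> d > 0" by (intro exI conjI) (rule dPhi[OF zD], rule F_sign_gt[OF assms(1) zD])
qed

lemma Phi_inj: "inj_on Phi (Dom a)"
proof (rule inj_onI, rule ccontr)
  fix x y assume xy: "x \<in> Dom a" "y \<in> Dom a" "Phi x = Phi y" "x \<noteq> y"
  show False
  proof (cases "a^2 < 1")
    case True
    show False
    proof (cases "x < y")
      case True2: True
      then show False using xy Phi_dec[OF True xy(1,2)] by simp
    next
      case False
      then have "y < x" using xy(4) by simp
      then show False using xy Phi_dec[OF True xy(2,1)] by simp
    qed
  next
    case False
    then have g: "a^2 > 1" using a1 by simp
    show False
    proof (cases "x < y")
      case True
      then show False using xy Phi_inc[OF g xy(1,2)] by simp
    next
      case False
      then have "y < x" using xy(4) by simp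
      then show False using xy Phi_inc[OF g xy(2,1)] by simp
    qed
  qed
qed

lemma Phi_cont: "continuous_on (Dom a) Phi"
  by (rule continuous_at_imp_continuous_on) (use dPhi DERIV_isCont in blast)

lemma Dom_interval: "is_interval (Dom a)"
proof (cases "a^2 < 1")
  case True then show ?thesis unfolding Dom_lt[OF True] is_interval_1 by auto
next
  case False then have "a^2 > 1" using a1 by simp
  then show ?thesis unfolding Dom_gt[OF \<open>a^2 > 1\<close>] is_interval_1 by auto
qed

lemma Phi_surj: assumes "t > T" shows "t \<in> Phi ` Dom a"
proof -
  obtain x1 where x1: "x1 \<in> Dom a" "Phi x1 < t" using Plow[OF assms] by blast
  obtain x2 where x2: "x2 \<in> Dom a" "Phi x2 > t" using Phigh[of t] by blast
  have "connected (Phi ` Dom a)"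
    using Phi_cont Dom_interval connected_continuous_image is_interval_connected_1 by blast
  then have c: "\<forall>x\<in>Phi ` Dom a. \<forall>y\<in>Phi ` Dom a. \<forall>z. x \<le> z \<longrightarrow> z \<le> y \<longrightarrow> z \<in> Phi ` Dom a"
    by (simp only: connected_iff_interval)
  have i1: "Phi x1 \<in> Phi ` Dom a" and i2: "Phi x2 \<in> Phi ` Dom a" using x1 x2 by auto
  show ?thesis by (rule c[rule_format, OF i1 i2]) (use x1 x2 in auto)
qed

definition "G3 = the_inv_into (Dom a) Phi"
definition "G1 = (\<lambda>t. (a^2 - 1) * G3 t / (a^2 - (G3 t)^2))"

lemma G3_props: assumes "t > T" shows "G3 t \<in> Dom a" "Phi (G3 t) = t"
proof -
  have s: "t \<in> Phi ` Dom a" by (rule Phi_surj[OF assms])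
  show "G3 t \<in> Dom a" unfolding G3_def by (rule the_inv_into_into[OF Phi_inj s order_refl])
  show "Phi (G3 t) = t" unfolding G3_def by (rule f_the_inv_into_f[OF Phi_inj s])
qed

lemma G3_eq: assumes "x \<in> Dom a" "t > T" "Phi x = t" shows "G3 t = x"
  using the_inv_into_f_f[OF Phi_inj assms(1)] assms(3) unfolding G3_def by simp

lemma G3_deriv: assumes "t > T"
  shows "(G3 has_real_derivative inverse ((a^2 - 1)^2 * (G3 t)^2 / (a^2 - (G3 t)^2)^3)) (at t)"
proof (rule inv_deriv[where S = "Dom a"])
  show "DERIV Phi (G3 t) :> (a^2 - 1)^2 * (G3 t)^2 / (a^2 - (G3 t)^2)^3"
    by (rule dPhi[OF G3_props(1)[OF assms]])
  show "(a^2 - 1)^2 * (G3 t)^2 / (a^2 - (G3 t)^2)^3 \<noteq> 0"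
    using k0 Dom_pos[OF G3_props(1)[OF assms]] Dom_ne[OF G3_props(1)[OF assms]] by simp
  show "open (Dom a)" using Dom_open[OF a1] .
  show "continuous_on (Dom a) Phi" by (rule Phi_cont)
  show "G3 t \<in> Dom a" "Phi (G3 t) = t" using G3_props[OF assms] by auto
  fix z assume "z \<in> Dom a"
  then show "G3 (Phi z) = z" unfolding G3_def by (rule the_inv_into_f_f[OF Phi_inj])
qed

lemma T_neg: "T < 0" using Pgt[OF Dom_one[OF a1]] P1 by simp

lemma G3_0: "G3 0 = 1" using G3_eq[OF Dom_one[OF a1] T_neg] P1 by simp

lemma G_hsol: "hsol a G1 G3 {T<..}"
  unfolding hsol_def
proof (intro conjI ballI)
  show "open {T<..}" by simp
  show "is_interval {T<..}" by (rule is_interval_Ioi')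
  show "0 \<in> {T<..}" using T_neg by simp
  show "G3 0 = 1" by (rule G3_0)
  show "G1 0 = 1" unfolding G1_def G3_0 using k0 by simp
  fix t assume "t \<in> {T<..}"
  then have t: "t > T" by simp
  have y: "G3 t \<noteq> 0" using Dom_pos[OF G3_props(1)[OF t]] by simp
  have w: "a^2 - (G3 t)^2 \<noteq> 0" using Dom_ne[OF G3_props(1)[OF t]] .
  show "G3 t \<noteq> 0" by (rule y)
  show "G1 t \<noteq> 0" unfolding G1_def using y w k0 by simp
  have d3: "(G3 has_real_derivative (a^2 - (G3 t)^2) / ((a^2 - 1) * G3 t / (a^2 - (G3 t)^2))^2) (at t)"
    using G3_deriv[OF t] unfolding alg_G3[OF k0 y w] .
  then show "(G3 has_real_derivative (a\<^sup>2 - (G3 t)\<^sup>2) / (G1 t)\<^sup>2) (at t)"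
    unfolding G1_def by simp
  show "(G1 has_real_derivative (a\<^sup>2 + (G3 t)\<^sup>2) / (G1 t * G3 t)) (at t)"
    unfolding G1_def by (rule G1_deriv[OF y w k0 d3])
qed


lemma G_uniq:
  assumes h: "hsol a g1 g3 I"
  shows "I \<subseteq> {T<..} \<and> (\<forall>t\<in>I. g1 t = G1 t \<and> g3 t = G3 t)"
proof -
  have I: "convex I" "0 \<in> I" using h is_interval_convex unfolding hsol_def by auto
  have info: "g1 t > 0 \<and> g3 t > 0 \<and> a^2 - (g3 t)^2 \<noteq> 0 \<and> g1 t = (a^2 - 1) * g3 t / (a^2 - (g3 t)^2) \<and> g3 t \<in> Dom a"
    if t: "t \<in> I" for t
  proof -
    have p: "g1 t > 0" "g3 t > 0" using hsol_pos[OF h t] by auto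
    have R: "g1 t * (a^2 - (g3 t)^2) / g3 t = a^2 - 1" by (rule R_const[OF h t])
    have w: "a^2 - (g3 t)^2 \<noteq> 0"
    proof
      assume "a^2 - (g3 t)^2 = 0"
      then show False using R k0 by simp
    qed
    have e: "g1 t = (a^2 - 1) * g3 t / (a^2 - (g3 t)^2)" using alg_solve[OF _ w R] p by simp
    have "0 < (a^2 - (g3 t)^2) * (a^2 - 1)" using alg_pos[OF p w R] .
    then have "g3 t \<in> Dom a" unfolding Dom_def using p by simp
    then show ?thesis using p w e by simp
  qed
  have "\<exists>c. \<forall>x\<in>I. Phi (g3 x) - x = c"
  proof (rule has_field_derivative_zero_constant[OF I(1)])
    fix x assume x: "x \<in> I"
    have ix: "g1 x > 0" "g3 x > 0" "a^2 - (g3 x)^2 \<noteq> 0" "g1 x = (a^2 - 1) * g3 x / (a^2 - (g3 x)^2)" "g3 x \<in> Dom a"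
      using info[OF x] by auto
    have d3: "(g3 has_real_derivative (a\<^sup>2 - (g3 x)\<^sup>2) / (g1 x)\<^sup>2) (at x)"
      using h x unfolding hsol_def by blast
    have dc: "((\<lambda>x. Phi (g3 x)) has_real_derivative
        (a^2 - 1)^2 * (g3 x)^2 / (a^2 - (g3 x)^2)^3 * ((a\<^sup>2 - (g3 x)\<^sup>2) / (g1 x)\<^sup>2)) (at x)"
      by (rule DERIV_chain2[OF dPhi[OF ix(5)] d3])
    have one: "(a^2 - 1)^2 * (g3 x)^2 / (a^2 - (g3 x)^2)^3 * ((a\<^sup>2 - (g3 x)\<^sup>2) / (g1 x)\<^sup>2) = 1"
      by (rule alg_chain[OF k0 _ ix(3) ix(4)]) (use ix in simp)
    have "((\<lambda>x. Phi (g3 x) - x) has_real_derivative 1 - 1) (at x)"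
      using DERIV_diff[OF dc DERIV_ident] unfolding one .
    then show "((\<lambda>x. Phi (g3 x) - x) has_real_derivative 0) (at x within I)"
      by (simp add: has_field_derivative_at_within)
  qed
  then obtain c where c: "\<And>x. x \<in> I \<Longrightarrow> Phi (g3 x) - x = c" by blast
  have "g3 0 = 1" using h unfolding hsol_def by blast
  then have c0: "c = 0" using c[OF I(2)] P1 by simp
  have "t \<in> {T<..} \<and> g1 t = G1 t \<and> g3 t = G3 t" if t: "t \<in> I" for t
  proof -
    have ix: "g1 t = (a^2 - 1) * g3 t / (a^2 - (g3 t)^2)" "g3 t \<in> Dom a" using info[OF t] by auto
    have ph: "Phi (g3 t) = t" using c[OF t] c0 by simp
    have tT: "t > T" using Pgt[OF ix(2)] ph by simp
    have "G3 t = g3 t" by (rule G3_eq[OF ix(2) tT ph])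
    then show ?thesis using tT ix(1) unfolding G1_def by simp
  qed
  then show ?thesis by blast
qed

lemma G3_lim_lt: assumes al: "a^2 < 1" shows "filterlim G3 at_top (at_right T)"
  unfolding filterlim_at_top
proof
  fix Z :: real
  define x0 where "x0 = max Z (\<bar>a\<bar> + 1)"
  have x0: "x0 \<in> Dom a" unfolding Dom_lt[OF al] x0_def by simp
  have "T < Phi x0" by (rule Pgt[OF x0])
  then have ev: "eventually (\<lambda>t. t \<in> {T<..<Phi x0}) (at_right T)" by (rule eventually_at_right_real)
  show "eventually (\<lambda>t. Z \<le> G3 t) (at_right T)"
  proof (rule eventually_mono[OF ev])
    fix t assume t: "t \<in> {T<..<Phi x0}"
    then have tT: "t > T" by simp
    have "x0 \<le> G3 t"
    proof (rule ccontr)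
      assume "\<not> x0 \<le> G3 t"
      then have "G3 t < x0" by simp
      then have "Phi x0 < Phi (G3 t)" by (rule Phi_dec[OF al G3_props(1)[OF tT] x0])
      then show False using G3_props(2)[OF tT] t by simp
    qed
    then show "Z \<le> G3 t" unfolding x0_def by simp
  qed
qed

lemma G1_lim_lt: assumes al: "a^2 < 1" shows "(G1 \<longlongrightarrow> 0) (at_right T)"
proof -
  have f: "((\<lambda>x. (a^2 - 1) * x / (a^2 - x^2)) \<longlongrightarrow> 0) at_top" by real_asymp
  have "((\<lambda>t. (\<lambda>x. (a^2 - 1) * x / (a^2 - x^2)) (G3 t)) \<longlongrightarrow> 0) (at_right T)"
    by (rule filterlim_compose[OF f G3_lim_lt[OF al]])
  then show ?thesis unfolding G1_def by simp
qed

lemma G3_lim_gt: assumes ag: "a^2 > 1" shows "(G3 \<longlongrightarrow> 0) (at_right T)"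
proof (rule order_tendstoI)
  fix e :: real assume e: "e < 0"
  show "eventually (\<lambda>t. e < G3 t) (at_right T)"
  proof (rule eventually_mono[OF eventually_at_right_less[of T]])
    fix t assume "T < t"
    then show "e < G3 t" using Dom_pos[OF G3_props(1)[of t]] e by force
  qed
next
  fix e :: real assume e: "0 < e"
  define x0 where "x0 = min e (\<bar>a\<bar> / 2)"
  have ab: "\<bar>a\<bar> > 1" using ag by (metis abs_le_square_iff abs_one not_le one_power2)
  have m: "min e (\<bar>a\<bar> / 2) \<le> \<bar>a\<bar> / 2" by simp
  then have m1: "min e (\<bar>a\<bar> / 2) < \<bar>a\<bar>" using ab by linarith
  have m2: "0 < min e (\<bar>a\<bar> / 2)" using e ab by simp
  have x0: "x0 \<in> Dom a" unfolding Dom_gt[OF ag] x0_def using m1 m2 by simp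
  have "T < Phi x0" by (rule Pgt[OF x0])
  then have ev: "eventually (\<lambda>t. t \<in> {T<..<Phi x0}) (at_right T)" by (rule eventually_at_right_real)
  show "eventually (\<lambda>t. G3 t < e) (at_right T)"
  proof (rule eventually_mono[OF ev])
    fix t assume t: "t \<in> {T<..<Phi x0}"
    then have tT: "t > T" by simp
    have "G3 t < x0"
    proof (rule ccontr)
      assume "\<not> G3 t < x0"
      then have "x0 = G3 t \<or> x0 < G3 t" by auto
      then have "Phi x0 \<le> Phi (G3 t)" using Phi_inc[OF ag x0 G3_props(1)[OF tT]] by auto
      then show False using G3_props(2)[OF tT] t by simp
    qed
    then show "G3 t < e" unfolding x0_def by simp
  qed
qed

lemma G1_lim_gt: assumes ag: "a^2 > 1" shows "(G1 \<longlongrightarrow> 0) (at_right T)"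
proof -
  have "((\<lambda>t. (a^2 - 1) * G3 t / (a^2 - (G3 t)^2)) \<longlongrightarrow> (a^2 - 1) * 0 / (a^2 - 0^2)) (at_right T)"
    by (intro tendsto_intros G3_lim_gt[OF ag]) (use ag in \<open>cases "a = 0"; simp\<close>)
  then show ?thesis unfolding G1_def by simp
qed

lemma general:
  "\<exists>G1 G3. hsol a G1 G3 {T<..} \<and> (\<forall>g1 g3 I. hsol a g1 g3 I \<longrightarrow> I \<subseteq> {T<..} \<and> (\<forall>t\<in>I. g1 t = G1 t \<and> g3 t = G3 t))
     \<and> (G1 \<longlongrightarrow> 0) (at_right T) \<and> (a^2 < 1 \<longrightarrow> filterlim G3 at_top (at_right T)) \<and> (a^2 > 1 \<longrightarrow> (G3 \<longlongrightarrow> 0) (at_right T))"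
proof (intro exI conjI allI impI)
  show "hsol a G1 G3 {T<..}" by (rule G_hsol)
  show "(G1 \<longlongrightarrow> 0) (at_right T)"
  proof (cases "a^2 < 1")
    case True then show ?thesis by (rule G1_lim_lt)
  next
    case False then have "a^2 > 1" using a1 by simp
    then show ?thesis by (rule G1_lim_gt)
  qed
  show "filterlim G3 at_top (at_right T)" if "a^2 < 1" using G3_lim_lt[OF that] .
  show "(G3 \<longlongrightarrow> 0) (at_right T)" if "a^2 > 1" using G3_lim_gt[OF that] .
  fix g1 g3 I assume "hsol a g1 g3 I"
  then show "I \<subseteq> {T<..}" "\<forall>t\<in>I. g1 t = G1 t \<and> g3 t = G3 t" using G_uniq by auto
qed

end


definition Pf :: "real \<Rightarrow> real \<Rightarrow> real" where
 "Pf b x = - x / (4 * (x^2 - b^2)^2) - x / (8 * b^2 * (x^2 - b^2)) - (ln \<bar>x - b\<bar> - ln (x + b)) / (16 * b^3)"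

lemma ln_abs_deriv: fixes x c :: real assumes "x \<noteq> c"
  shows "((\<lambda>x. ln \<bar>x - c\<bar>) has_real_derivative 1 / (x - c)) (at x)"
proof (cases "x > c")
  case True
  have "((\<lambda>x. ln (x - c)) has_real_derivative 1 / (x - c)) (at x)"
    using True by (auto intro!: derivative_eq_intros)
  then show ?thesis
    by (rule has_field_derivative_transform_within_open[where S="{c<..}"]) (use True in auto)
next
  case False
  then have F: "x < c" using assms by auto
  have "((\<lambda>x. ln (c - x)) has_real_derivative 1 / (x - c)) (at x)"
    using F by (auto intro!: derivative_eq_intros simp: field_simps)
  then show ?thesis
    by (rule has_field_derivative_transform_within_open[where S="{..<c}"]) (use F in auto)
qed

lemma Pf_deriv: fixes x b :: real assumes ne: "x - b \<noteq> 0" "x + b > 0" and b: "b > 0"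
  shows "(Pf b has_real_derivative x^2 / (x^2 - b^2)^3) (at x)"
proof -
  obtain s where s: "s = x^2 - b^2" by blast
  have s0: "s \<noteq> 0" unfolding s using ne by (simp add: power2_eq_square square_diff_square_factored)
  have dq: "((\<lambda>x. x^2 - b^2) has_real_derivative 2*x) (at x)"
    by (auto intro!: derivative_eq_intros)
  have dA: "((\<lambda>x. - x / (4 * (x^2 - b^2)^2)) has_real_derivative (- 1 / (4 * s^2) + x^2 / s^3)) (at x)"
    apply (rule derivative_eq_intros refl dq)+
    using s0 apply (simp add: s[symmetric])
    apply (simp only: s[symmetric])
    using s0 apply (simp add: field_simps)
    apply algebra
    done
  have dB: "((\<lambda>x. x / (8 * b^2 * (x^2 - b^2))) has_real_derivative (1 / (8 * b^2 * s) - x^2 / (4 * b^2 * s^2))) (at x)"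
    apply (rule derivative_eq_intros refl dq)+
    using s0 b apply (simp add: s[symmetric])
    apply (simp only: s[symmetric])
    using s0 b apply (simp add: field_simps)
    apply algebra
    done
  have d1: "((\<lambda>x. ln \<bar>x - b\<bar>) has_real_derivative 1 / (x - b)) (at x)"
    by (rule ln_abs_deriv) (use ne in simp)
  have d2: "((\<lambda>x. ln (x + b)) has_real_derivative 1 / (x + b)) (at x)"
    using ne by (auto intro!: derivative_eq_intros)
  have "(1 / (x - b) - 1 / (x + b)) / (16 * b^3) = 1 / (8 * b^2 * s)"
    using ne b s0 unfolding s by (simp add: field_simps power2_eq_square power3_eq_cube)
  then have dC: "((\<lambda>x. (ln \<bar>x - b\<bar> - ln (x + b)) / (16 * b^3)) has_real_derivative (1 / (8 * b^2 * s))) (at x)"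
    using DERIV_cdivide[OF DERIV_diff[OF d1 d2], of "16 * b^3"] by simp
  have s2: "x^2 = s + b^2" using s by simp
  have eq: "(- 1 / (4 * s^2) + x^2 / s^3) - (1 / (8 * b^2 * s) - x^2 / (4 * b^2 * s^2)) - 1 / (8 * b^2 * s) = x^2 / (x^2 - b^2)^3"
    unfolding s[symmetric] unfolding s2 using s0 b by (simp add: field_simps) algebra
  have "((\<lambda>x. - x / (4 * (x^2 - b^2)^2) - x / (8 * b^2 * (x^2 - b^2)) - (ln \<bar>x - b\<bar> - ln (x + b)) / (16 * b^3)) has_real_derivative 
     x^2 / (x^2 - b^2)^3) (at x)"
    using DERIV_diff[OF DERIV_diff[OF dA dB] dC] unfolding eq .
  then show ?thesis unfolding Pf_def[abs_def] .
qed

lemma Pf_0: "b > 0 \<Longrightarrow> Pf b 0 = 0" unfolding Pf_def by simp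

lemma Pf_lim_top: assumes b: "b > 0" shows "(Pf b \<longlongrightarrow> 0) at_top"
proof -
  have lim: "((\<lambda>x. - x / (4 * (x^2 - b^2)^2) - x / (8 * b^2 * (x^2 - b^2)) - (ln (x - b) - ln (x + b)) / (16 * b^3)) \<longlongrightarrow> 0) at_top"
    using b by real_asymp
  have ev: "eventually (\<lambda>x. - x / (4 * (x^2 - b^2)^2) - x / (8 * b^2 * (x^2 - b^2)) - (ln (x - b) - ln (x + b)) / (16 * b^3) = Pf b x) at_top"
    using eventually_gt_at_top[of b] by (rule eventually_mono) (simp add: Pf_def)
  show ?thesis by (rule Lim_transform_eventually[OF lim ev])
qed

lemma Pf_lim_right: assumes b: "b > 0" shows "filterlim (Pf b) at_bot (at_right b)"
proof -
  have lim: "filterlim (\<lambda>x. - x / (4 * (x^2 - b^2)^2) - x / (8 * b^2 * (x^2 - b^2)) - (ln (x - b) - ln (x + b)) / (16 * b^3)) at_bot (at_right b)"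
    using b by real_asymp
  have ev: "eventually (\<lambda>x. - x / (4 * (x^2 - b^2)^2) - x / (8 * b^2 * (x^2 - b^2)) - (ln (x - b) - ln (x + b)) / (16 * b^3) = Pf b x) (at_right b)"
    using eventually_at_right_less[of b] by (rule eventually_mono) (simp add: Pf_def)
  show ?thesis using lim unfolding filterlim_cong[OF refl refl ev] .
qed

lemma Pf_lim_left: assumes b: "b > 0" shows "filterlim (Pf b) at_bot (at_left b)"
proof -
  have lim: "filterlim (\<lambda>x. - x / (4 * (x^2 - b^2)^2) - x / (8 * b^2 * (x^2 - b^2)) - (ln (b - x) - ln (x + b)) / (16 * b^3)) at_bot (at_left b)"
    using b by real_asymp
  have ev: "eventually (\<lambda>x. - x / (4 * (x^2 - b^2)^2) - x / (8 * b^2 * (x^2 - b^2)) - (ln (b - x) - ln (x + b)) / (16 * b^3) = Pf b x) (at_left b)"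
    using eventually_at_left_real[OF b] by (rule eventually_mono) (simp add: Pf_def)
  show ?thesis using lim unfolding filterlim_cong[OF refl refl ev] .
qed


definition Tm :: "real \<Rightarrow> real" where
  "Tm b = (if b = 0 then - 1 / 3 else if b = 1 then - 1 / 4 else (1 - b^2)^2 * Pf b 1)"
definition PhiF :: "real \<Rightarrow> real \<Rightarrow> real" where
  "PhiF b x = (if b = 0 then (1 / x^3 - 1) / 3 else - ((1 - b^2)^2) * (Pf b x - Pf b 1))"

lemma big_helper: fixes c p P1 t :: real assumes c: "c > 0" and p: "p \<le> P1 - (\<bar>t\<bar> + 1) / c"
  shows "t < - c * (p - P1)"
proof -
  have h: "p - P1 \<le> - ((\<bar>t\<bar> + 1) / c)" using p by simp
  have "c * (p - P1) \<le> c * (- ((\<bar>t\<bar> + 1) / c))" by (rule mult_left_mono[OF h]) (use c in simp)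
  also have "... = - (\<bar>t\<bar> + 1)" using c by simp
  finally show ?thesis by linarith
qed

lemma cube_swap: fixes x y :: real shows "(y - x)^3 = - ((x - y)^3)"
  by (simp add: power3_eq_cube algebra_simps)

context fixes b :: real assumes b0: "b > 0" and b1: "b \<noteq> 1"
begin

lemma c_pos: "(1 - b^2)^2 > 0"
proof -
  have "b^2 \<noteq> 1" using b0 b1 by (metis abs_of_pos power2_eq_1_iff abs_one abs_minus_cancel)
  then show ?thesis by simp
qed

lemma PhiF_eq: "PhiF b = (\<lambda>x. - ((1 - b^2)^2) * (Pf b x - Pf b 1))"
  using b0 unfolding PhiF_def by auto

lemma Tm_eq: "Tm b = (1 - b^2)^2 * Pf b 1" using b0 b1 unfolding Tm_def by auto

lemma PhiF_deriv: assumes "x + b > 0" "x \<noteq> b"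
  shows "(PhiF b has_real_derivative (b^2 - 1)^2 * x^2 / (b^2 - x^2)^3) (at x)"
proof -
  have d: "((\<lambda>x. - ((1 - b^2)^2) * (Pf b x - Pf b 1)) has_real_derivative - ((1 - b^2)^2) * (x^2 / (x^2 - b^2)^3 - 0)) (at x)"
    by (rule DERIV_cmult[OF DERIV_diff[OF Pf_deriv DERIV_const]]) (use assms b0 in auto)
  have "- ((1 - b^2)^2) * (x^2 / (x^2 - b^2)^3 - 0) = (b^2 - 1)^2 * x^2 / (b^2 - x^2)^3"
    unfolding cube_swap[of "x^2" "b^2"] by (simp add: power2_commute)
  then show ?thesis using d unfolding PhiF_eq by simp
qed

lemma PhiF_gt: assumes "Pf b x < 0" shows "PhiF b x > Tm b"
proof -
  have "PhiF b x - Tm b = - ((1 - b^2)^2) * Pf b x" unfolding PhiF_eq Tm_eq by (simp add: algebra_simps)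
  also have "... > 0" using c_pos assms by (simp add: mult_pos_neg)
  finally show ?thesis by simp
qed

lemma PhiF_big: assumes "Pf b x \<le> Pf b 1 - (\<bar>t\<bar> + 1) / (1 - b^2)^2" shows "t < PhiF b x"
  unfolding PhiF_eq using big_helper[OF c_pos assms] by simp

end


lemma witness: "F \<noteq> bot \<Longrightarrow> eventually P F \<Longrightarrow> \<exists>x. P x" by (rule eventually_happens')

lemma facts_lt:
  assumes b0: "0 < b" and b1: "b < 1"
  shows "\<forall>x\<in>Dom b. (PhiF b has_real_derivative (b^2 - 1)^2 * x^2 / (b^2 - x^2)^3) (at x)"
    and "PhiF b 1 = 0"
    and "\<forall>x\<in>Dom b. PhiF b x > Tm b"
    and "\<forall>t>Tm b. \<exists>x\<in>Dom b. PhiF b x < t"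
    and "\<forall>t. \<exists>x\<in>Dom b. PhiF b x > t"
proof -
  have bn: "b \<noteq> 1" using b1 by simp
  have bs: "b^2 < 1" using b0 b1 abs_square_less_1[of b] by simp
  have D: "Dom b = {b<..}" using Dom_lt[OF bs] b0 by simp
  show "\<forall>x\<in>Dom b. (PhiF b has_real_derivative (b^2 - 1)^2 * x^2 / (b^2 - x^2)^3) (at x)"
    unfolding D using PhiF_deriv[OF b0 bn] b0 by auto
  show "PhiF b 1 = 0" unfolding PhiF_eq[OF b0 bn] by simp
  have neg: "Pf b x < 0" if x: "x > b" for x
  proof -
    have "(0::real) < (\<lambda>y. - Pf b y) x"
    proof (rule DERIV_neg_imp_decreasing_at_top[where f="\<lambda>y. - Pf b y" and flim=0 and b=x])
      fix y assume y: "y \<ge> x"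
      have yb: "y > b" using x y by simp
      have "b^2 < y^2" using yb b0 by (simp add: power_strict_mono)
      then have pos: "y^2 / (y^2 - b^2)^3 > 0" using yb b0 by simp
      have "DERIV (\<lambda>y. - Pf b y) y :> - (y^2 / (y^2 - b^2)^3)"
        by (rule DERIV_minus[OF Pf_deriv]) (use yb b0 in auto)
      then show "\<exists>d. DERIV (\<lambda>y. - Pf b y) y :> d \<and> d < 0" using pos by auto
    next
      show "((\<lambda>y. - Pf b y) \<longlongrightarrow> 0) at_top" using tendsto_minus[OF Pf_lim_top[OF b0]] by simp
    qed
    then show ?thesis by simp
  qed
  show "\<forall>x\<in>Dom b. PhiF b x > Tm b" unfolding D using PhiF_gt[OF b0 bn] neg by auto
  show "\<forall>t>Tm b. \<exists>x\<in>Dom b. PhiF b x < t"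
  proof (intro allI impI)
    fix t assume t: "t > Tm b"
    have "(PhiF b \<longlongrightarrow> - ((1 - b^2)^2) * (0 - Pf b 1)) at_top"
      unfolding PhiF_eq[OF b0 bn] by (intro tendsto_intros Pf_lim_top[OF b0])
    then have l: "(PhiF b \<longlongrightarrow> Tm b) at_top" unfolding Tm_eq[OF b0 bn] by simp
    have ev: "eventually (\<lambda>x. PhiF b x < t \<and> b < x) at_top"
      using order_tendstoD(2)[OF l t] eventually_gt_at_top[of b] by (rule eventually_conj)
    then obtain x where "PhiF b x < t \<and> b < x" using witness[OF _ ev] by auto
    then show "\<exists>x\<in>Dom b. PhiF b x < t" unfolding D by auto
  qed
  show "\<forall>t. \<exists>x\<in>Dom b. PhiF b x > t"
  proof
    fix t :: real
    have "eventually (\<lambda>x. Pf b x \<le> Pf b 1 - (\<bar>t\<bar> + 1) / (1 - b^2)^2) (at_right b)"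
      using Pf_lim_right[OF b0] unfolding filterlim_at_bot by blast
    then have ev2: "eventually (\<lambda>x. Pf b x \<le> Pf b 1 - (\<bar>t\<bar> + 1) / (1 - b^2)^2 \<and> b < x) (at_right b)"
      using eventually_at_right_less[of b] by (rule eventually_conj)
    then obtain x where "Pf b x \<le> Pf b 1 - (\<bar>t\<bar> + 1) / (1 - b^2)^2 \<and> b < x"
      using witness[OF _ ev2] by auto
    then show "\<exists>x\<in>Dom b. PhiF b x > t" unfolding D using PhiF_big[OF b0 bn] by auto
  qed
qed

lemma facts_gt:
  assumes b1: "b > 1"
  shows "\<forall>x\<in>Dom b. (PhiF b has_real_derivative (b^2 - 1)^2 * x^2 / (b^2 - x^2)^3) (at x)"
    and "PhiF b 1 = 0"
    and "\<forall>x\<in>Dom b. PhiF b x > Tm b"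
    and "\<forall>t>Tm b. \<exists>x\<in>Dom b. PhiF b x < t"
    and "\<forall>t. \<exists>x\<in>Dom b. PhiF b x > t"
proof -
  have b0: "b > 0" using b1 by simp
  have bn: "b \<noteq> 1" using b1 by simp
  have bs: "b^2 > 1" using b1 by simp
  have D: "Dom b = {0<..<b}" using Dom_gt[OF bs] b0 by simp
  show "\<forall>x\<in>Dom b. (PhiF b has_real_derivative (b^2 - 1)^2 * x^2 / (b^2 - x^2)^3) (at x)"
    unfolding D using PhiF_deriv[OF b0 bn] b0 by auto
  show "PhiF b 1 = 0" unfolding PhiF_eq[OF b0 bn] by simp
  have dneg: "\<exists>d. DERIV (Pf b) y :> d \<and> d < 0" if y: "0 < y" "y < b" for y
  proof -
    have "y^2 < b^2" using y by (simp add: power_strict_mono)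
    then have "y^2 / (y^2 - b^2)^3 < 0" using y by (simp add: divide_pos_neg)
    moreover have "DERIV (Pf b) y :> y^2 / (y^2 - b^2)^3" by (rule Pf_deriv) (use y in auto)
    ultimately show ?thesis by blast
  qed
  have neg: "Pf b x < 0" if x: "0 < x" "x < b" for x
  proof -
    have "Pf b x < Pf b (x / 2)"
      by (rule DERIV_neg_imp_decreasing[where f="Pf b" and a="x / 2" and b=x]) (use x in \<open>auto intro!: dneg\<close>)
    moreover have "Pf b (x / 2) \<le> Pf b 0"
    proof (rule DERIV_nonpos_imp_decreasing_open[where f="Pf b" and a=0 and b="x / 2"])
      show "0 \<le> x / 2" using x by simp
      fix y assume "0 < y" "y < x / 2"
      then show "\<exists>d. DERIV (Pf b) y :> d \<and> d \<le> 0" using dneg[of y] x by force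
    next
      show "continuous_on {0..x / 2} (Pf b)"
      proof (rule continuous_at_imp_continuous_on, rule ballI)
        fix y assume "y \<in> {0..x / 2}"
        then have "y + b > 0" "y - b \<noteq> 0" using x b0 by auto
        then show "isCont (Pf b) y" using DERIV_isCont[OF Pf_deriv] b0 by blast
      qed
    qed
    ultimately show ?thesis using Pf_0[OF b0] by simp
  qed
  show "\<forall>x\<in>Dom b. PhiF b x > Tm b" unfolding D using PhiF_gt[OF b0 bn] neg by auto
  show "\<forall>t>Tm b. \<exists>x\<in>Dom b. PhiF b x < t"
  proof (intro allI impI)
    fix t assume t: "t > Tm b"
    have "DERIV (PhiF b) 0 :> (b^2 - 1)^2 * 0^2 / (b^2 - 0^2)^3" by (rule PhiF_deriv[OF b0 bn]) (use b0 in auto)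
    then have "isCont (PhiF b) 0" by (rule DERIV_isCont)
    then have "(PhiF b \<longlongrightarrow> PhiF b 0) (at_right 0)"
      unfolding isCont_def by (rule tendsto_mono[OF at_le[OF subset_UNIV]])
    moreover have "PhiF b 0 = Tm b" unfolding PhiF_eq[OF b0 bn] Tm_eq[OF b0 bn] Pf_0[OF b0] by simp
    ultimately have l: "(PhiF b \<longlongrightarrow> Tm b) (at_right 0)" by simp
    have ev: "eventually (\<lambda>x. PhiF b x < t \<and> x \<in> {0<..<b}) (at_right 0)"
      using order_tendstoD(2)[OF l t] eventually_at_right_real[OF b0] by (rule eventually_conj)
    then obtain x where "PhiF b x < t \<and> x \<in> {0<..<b}" using witness[OF _ ev] by auto
    then show "\<exists>x\<in>Dom b. PhiF b x < t" unfolding D by auto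
  qed
  show "\<forall>t. \<exists>x\<in>Dom b. PhiF b x > t"
  proof
    fix t :: real
    have "eventually (\<lambda>x. Pf b x \<le> Pf b 1 - (\<bar>t\<bar> + 1) / (1 - b^2)^2) (at_left b)"
      using Pf_lim_left[OF b0] unfolding filterlim_at_bot by blast
    then have ev2: "eventually (\<lambda>x. Pf b x \<le> Pf b 1 - (\<bar>t\<bar> + 1) / (1 - b^2)^2 \<and> x \<in> {0<..<b}) (at_left b)"
      using eventually_at_left_real[OF b0] by (rule eventually_conj)
    then obtain x where "Pf b x \<le> Pf b 1 - (\<bar>t\<bar> + 1) / (1 - b^2)^2 \<and> x \<in> {0<..<b}"
      using witness[OF _ ev2] by auto
    then have "x \<in> {0<..<b}" "t < PhiF b x" using PhiF_big[OF b0 bn] by auto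
    then show "\<exists>x\<in>Dom b. PhiF b x > t" unfolding D by blast
  qed
qed


lemma facts_0:
  shows "\<forall>x\<in>Dom 0. (PhiF 0 has_real_derivative (0^2 - 1)^2 * x^2 / (0^2 - x^2)^3) (at x)"
    and "PhiF 0 1 = 0"
    and "\<forall>x\<in>Dom 0. PhiF 0 x > Tm 0"
    and "\<forall>t>Tm 0. \<exists>x\<in>Dom 0. PhiF 0 x < t"
    and "\<forall>t. \<exists>x\<in>Dom 0. PhiF 0 x > t"
proof -
  have D: "Dom 0 = {0<..}" using Dom_lt[of 0] by simp
  have P: "PhiF 0 = (\<lambda>x. (1 / x^3 - 1) / 3)" unfolding PhiF_def by simp
  have T: "Tm 0 = - 1 / 3" unfolding Tm_def by simp
  show "\<forall>x\<in>Dom 0. (PhiF 0 has_real_derivative (0^2 - 1)^2 * x^2 / (0^2 - x^2)^3) (at x)"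
  proof
    fix x :: real assume "x \<in> Dom 0"
    then have x: "x > 0" unfolding D by simp
    have "((\<lambda>x. (1 / x^3 - 1) / 3) has_real_derivative (0^2 - 1)^2 * x^2 / (0^2 - x^2)^3) (at x)"
      using x by (auto intro!: derivative_eq_intros simp: field_simps eval_nat_numeral)
    then show "(PhiF 0 has_real_derivative (0^2 - 1)^2 * x^2 / (0^2 - x^2)^3) (at x)" unfolding P .
  qed
  show "PhiF 0 1 = 0" unfolding P by simp
  show "\<forall>x\<in>Dom 0. PhiF 0 x > Tm 0" unfolding D P T by simp
  show "\<forall>t>Tm 0. \<exists>x\<in>Dom 0. PhiF 0 x < t"
  proof (intro allI impI)
    fix t assume t: "t > Tm 0"
    have l: "((\<lambda>x::real. (1 / x^3 - 1) / 3) \<longlongrightarrow> - 1 / 3) at_top" by real_asymp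
    have ev: "eventually (\<lambda>x. (1 / x^3 - 1) / 3 < t \<and> 0 < x) at_top"
      using order_tendstoD(2)[OF l] t T eventually_gt_at_top[of 0] by (simp add: eventually_conj)
    obtain x where x: "(1 / x^3 - 1) / 3 < t \<and> 0 < x" using witness[OF _ ev] by auto
    then have "x \<in> Dom 0" "PhiF 0 x < t" unfolding D P by auto
    then show "\<exists>x\<in>Dom 0. PhiF 0 x < t" by blast
  qed
  show "\<forall>t. \<exists>x\<in>Dom 0. PhiF 0 x > t"
  proof
    fix t :: real
    have l: "filterlim (\<lambda>x::real. (1 / x^3 - 1) / 3) at_top (at_right 0)" by real_asymp
    have "eventually (\<lambda>x. t + 1 \<le> (1 / x^3 - 1) / 3) (at_right 0)"
      using l unfolding filterlim_at_top by blast
    then have ev: "eventually (\<lambda>x. t + 1 \<le> (1 / x^3 - 1) / 3 \<and> 0 < x) (at_right 0)"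
      using eventually_at_right_less[of 0] by (rule eventually_conj)
    obtain x where x: "t + 1 \<le> (1 / x^3 - 1) / 3 \<and> 0 < x" using witness[OF _ ev] by auto
    then have "x \<in> Dom 0" "t < PhiF 0 x" unfolding D P by auto
    then show "\<exists>x\<in>Dom 0. PhiF 0 x > t" by blast
  qed
qed

lemma facts_a:
  assumes a1: "a^2 \<noteq> 1"
  shows "\<forall>x\<in>Dom a. (PhiF \<bar>a\<bar> has_real_derivative (a^2 - 1)^2 * x^2 / (a^2 - x^2)^3) (at x)"
    and "PhiF \<bar>a\<bar> 1 = 0"
    and "\<forall>x\<in>Dom a. PhiF \<bar>a\<bar> x > Tm \<bar>a\<bar>"
    and "\<forall>t>Tm \<bar>a\<bar>. \<exists>x\<in>Dom a. PhiF \<bar>a\<bar> x < t"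
    and "\<forall>t. \<exists>x\<in>Dom a. PhiF \<bar>a\<bar> x > t"
proof -
  have e1: "Dom a = Dom \<bar>a\<bar>" unfolding Dom_def by simp
  have e2: "a^2 = \<bar>a\<bar>^2" by simp
  have ab: "\<bar>a\<bar> \<noteq> 1" using a1 abs_square_eq_1[of a] by simp
  consider "\<bar>a\<bar> = 0" | "0 < \<bar>a\<bar> \<and> \<bar>a\<bar> < 1" | "\<bar>a\<bar> > 1" using ab by linarith
  then have "(\<forall>x\<in>Dom \<bar>a\<bar>. (PhiF \<bar>a\<bar> has_real_derivative (\<bar>a\<bar>^2 - 1)^2 * x^2 / (\<bar>a\<bar>^2 - x^2)^3) (at x))
    \<and> PhiF \<bar>a\<bar> 1 = 0 \<and> (\<forall>x\<in>Dom \<bar>a\<bar>. PhiF \<bar>a\<bar> x > Tm \<bar>a\<bar>)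
    \<and> (\<forall>t>Tm \<bar>a\<bar>. \<exists>x\<in>Dom \<bar>a\<bar>. PhiF \<bar>a\<bar> x < t) \<and> (\<forall>t. \<exists>x\<in>Dom \<bar>a\<bar>. PhiF \<bar>a\<bar> x > t)"
  proof cases
    case 1
    show ?thesis unfolding 1 using facts_0 by blast
  next
    case 2
    then have b0: "0 < \<bar>a\<bar>" and b1: "\<bar>a\<bar> < 1" by auto
    show ?thesis using facts_lt[OF b0 b1] by blast
  next
    case 3
    show ?thesis using facts_gt[OF 3] by blast
  qed
  then show "\<forall>x\<in>Dom a. (PhiF \<bar>a\<bar> has_real_derivative (a^2 - 1)^2 * x^2 / (a^2 - x^2)^3) (at x)"
    and "PhiF \<bar>a\<bar> 1 = 0"
    and "\<forall>x\<in>Dom a. PhiF \<bar>a\<bar> x > Tm \<bar>a\<bar>"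
    and "\<forall>t>Tm \<bar>a\<bar>. \<exists>x\<in>Dom a. PhiF \<bar>a\<bar> x < t"
    and "\<forall>t. \<exists>x\<in>Dom a. PhiF \<bar>a\<bar> x > t"
    unfolding e1 e2 by blast+
qed

lemma per_a:
  "Tm \<bar>a\<bar> < 0 \<and> (\<exists>G1 G3. hsol a G1 G3 {Tm \<bar>a\<bar><..}
    \<and> (\<forall>g1 g3 I. hsol a g1 g3 I \<longrightarrow> I \<subseteq> {Tm \<bar>a\<bar><..} \<and> (\<forall>t\<in>I. g1 t = G1 t \<and> g3 t = G3 t))
    \<and> (G1 \<longlongrightarrow> 0) (at_right (Tm \<bar>a\<bar>))
    \<and> (\<bar>a\<bar> < 1 \<longrightarrow> filterlim G3 at_top (at_right (Tm \<bar>a\<bar>)))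
    \<and> (\<bar>a\<bar> = 1 \<longrightarrow> (G3 \<longlongrightarrow> 1) (at_right (Tm \<bar>a\<bar>)))
    \<and> (\<bar>a\<bar> > 1 \<longrightarrow> (G3 \<longlongrightarrow> 0) (at_right (Tm \<bar>a\<bar>))))"
proof (cases "\<bar>a\<bar> = 1")
  case True
  then have a1: "a^2 = 1" using abs_square_eq_1 by blast
  have T: "Tm \<bar>a\<bar> = - 1 / 4" unfolding Tm_def True by simp
  have l: "((\<lambda>t. sqrt (1 + 4 * t)) \<longlongrightarrow> sqrt (1 + 4 * (- 1 / 4))) (at_right (- 1 / 4 :: real))"
    by (intro tendsto_intros)
  show ?thesis unfolding T
  proof (intro conjI exI allI impI)
    show "- 1 / 4 < (0::real)" by simp
    show "hsol a (\<lambda>t. sqrt (1 + 4 * t)) (\<lambda>t. 1) {- 1 / 4<..}" by (rule case_one_ex[OF a1])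
    show "((\<lambda>t. sqrt (1 + 4 * t)) \<longlongrightarrow> 0) (at_right (- 1 / 4))" using l by simp
    show "((\<lambda>t. 1::real) \<longlongrightarrow> 1) (at_right (- 1 / 4))" by simp
    fix g1 g3 I assume "hsol a g1 g3 I"
    then show "I \<subseteq> {- 1 / 4<..}" "\<forall>t\<in>I. g1 t = sqrt (1 + 4 * t) \<and> g3 t = 1"
      using case_one_uniq[OF a1] by auto
  next
    assume "\<bar>a\<bar> < 1" then show "filterlim (\<lambda>t. 1::real) at_top (at_right (- 1 / 4))" using True by simp
  next
    assume "\<bar>a\<bar> > 1" then show "((\<lambda>t. 1::real) \<longlongrightarrow> 0) (at_right (- 1 / 4))" using True by simp
  qed
next
  case False
  then have a1: "a^2 \<noteq> 1" using abs_square_eq_1 by blast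
  note f = facts_a[OF a1]
  have neg: "Tm \<bar>a\<bar> < 0" using f(2,3) Dom_one[OF a1] by force
  have g: "\<exists>G1 G3. hsol a G1 G3 {Tm \<bar>a\<bar><..} \<and> (\<forall>g1 g3 I. hsol a g1 g3 I \<longrightarrow> I \<subseteq> {Tm \<bar>a\<bar><..} \<and> (\<forall>t\<in>I. g1 t = G1 t \<and> g3 t = G3 t))
     \<and> (G1 \<longlongrightarrow> 0) (at_right (Tm \<bar>a\<bar>)) \<and> (a^2 < 1 \<longrightarrow> filterlim G3 at_top (at_right (Tm \<bar>a\<bar>))) \<and> (a^2 > 1 \<longrightarrow> (G3 \<longlongrightarrow> 0) (at_right (Tm \<bar>a\<bar>)))"
    by (rule general[where a=a and T="Tm \<bar>a\<bar>" and Phi="PhiF \<bar>a\<bar>"]) (use a1 f in auto)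
  have c1: "\<bar>a\<bar> < 1 \<Longrightarrow> a^2 < 1" using abs_square_less_1 by blast
  have c2: "\<bar>a\<bar> > 1 \<Longrightarrow> a^2 > 1" using abs_square_le_1[of a] by linarith
  show ?thesis using neg g c1 c2 False by blast
qed


lemma main_a:
  "(\<exists>g1 g3. hmaxsol a g1 g3 {Tm \<bar>a\<bar><..}) \<and>
      (\<forall>g1 g3 I. hmaxsol a g1 g3 I \<longrightarrow>
          I = {Tm \<bar>a\<bar><..} \<and>
          (g1 \<longlongrightarrow> 0) (at_right (Tm \<bar>a\<bar>)) \<and>
          (\<bar>a\<bar> < 1 \<longrightarrow> filterlim g3 at_top (at_right (Tm \<bar>a\<bar>))) \<and>
          (\<bar>a\<bar> = 1 \<longrightarrow> (g3 \<longlongrightarrow> 1) (at_right (Tm \<bar>a\<bar>))) \<and>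
          (\<bar>a\<bar> > 1 \<longrightarrow> (g3 \<longlongrightarrow> 0) (at_right (Tm \<bar>a\<bar>))))"
proof -
  define T where "T = Tm \<bar>a\<bar>"
  obtain G1 G3 where ex: "hsol a G1 G3 {T<..}"
    and uniq: "\<forall>g1 g3 I. hsol a g1 g3 I \<longrightarrow> I \<subseteq> {T<..} \<and> (\<forall>t\<in>I. g1 t = G1 t \<and> g3 t = G3 t)"
    and l1: "(G1 \<longlongrightarrow> 0) (at_right T)"
    and l2: "\<bar>a\<bar> < 1 \<longrightarrow> filterlim G3 at_top (at_right T)"
    and l3: "\<bar>a\<bar> = 1 \<longrightarrow> (G3 \<longlongrightarrow> 1) (at_right T)"
    and l4: "\<bar>a\<bar> > 1 \<longrightarrow> (G3 \<longlongrightarrow> 0) (at_right T)"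
    using per_a[of a] unfolding T_def[symmetric] by blast
  have uniq': "\<And>g1 g3 I. hsol a g1 g3 I \<Longrightarrow> I \<subseteq> {T<..} \<and> (\<forall>t\<in>I. g1 t = G1 t \<and> g3 t = G3 t)"
    using uniq by blast
  have P1: "\<exists>g1 g3. hmaxsol a g1 g3 {T<..}" using assemble(1)[of a G1 G3 T] ex uniq' by blast
  have P2: "I = {T<..} \<and> (g1 \<longlongrightarrow> 0) (at_right T) \<and>
          (\<bar>a\<bar> < 1 \<longrightarrow> filterlim g3 at_top (at_right T)) \<and>
          (\<bar>a\<bar> = 1 \<longrightarrow> (g3 \<longlongrightarrow> 1) (at_right T)) \<and>
          (\<bar>a\<bar> > 1 \<longrightarrow> (g3 \<longlongrightarrow> 0) (at_right T))" if m: "hmaxsol a g1 g3 I" for g1 g3 I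
  proof -
    have c: "I = {T<..}" "\<forall>t\<in>I. g1 t = G1 t \<and> g3 t = G3 t" using assemble(2)[of a G1 G3 T g1 g3 I] ex uniq' m by blast+
    have e1: "eventually (\<lambda>t. G1 t = g1 t) (at_right T)"
      using eventually_at_right_less[of T] by (rule eventually_mono) (use c in auto)
    have e3: "eventually (\<lambda>t. G3 t = g3 t) (at_right T)"
      using eventually_at_right_less[of T] by (rule eventually_mono) (use c in auto)
    have "(g1 \<longlongrightarrow> 0) (at_right T)" using l1 tendsto_cong[OF e1] by simp
    moreover have "\<bar>a\<bar> < 1 \<longrightarrow> filterlim g3 at_top (at_right T)"
      using l2 filterlim_cong[OF refl refl e3] by simp
    moreover have "\<bar>a\<bar> = 1 \<longrightarrow> (g3 \<longlongrightarrow> 1) (at_right T)" using l3 tendsto_cong[OF e3] by simp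
    moreover have "\<bar>a\<bar> > 1 \<longrightarrow> (g3 \<longlongrightarrow> 0) (at_right T)" using l4 tendsto_cong[OF e3] by simp
    ultimately show ?thesis using c(1) by blast
  qed
  show ?thesis using P1 P2 unfolding T_def by blast
qed

theorem mainTheorem9:
  shows "\<exists>Tmin :: real \<Rightarrow> real.
    (\<forall>a. Tmin a < 0) \<and> (\<forall>a. Tmin (- a) = Tmin a) \<and> Tmin 0 = - 1/3 \<and>
    (\<forall>a. (\<exists>g1 g3. hmaxsol a g1 g3 {Tmin a<..}) \<and>
      (\<forall>g1 g3 I. hmaxsol a g1 g3 I \<longrightarrow>
          I = {Tmin a<..} \<and>
          (g1 \<longlongrightarrow> 0) (at_right (Tmin a)) \<and>
          (\<bar>a\<bar> < 1 \<longrightarrow> filterlim g3 at_top (at_right (Tmin a))) \<and>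
          (\<bar>a\<bar> = 1 \<longrightarrow> (g3 \<longlongrightarrow> 1) (at_right (Tmin a))) \<and>
          (\<bar>a\<bar> > 1 \<longrightarrow> (g3 \<longlongrightarrow> 0) (at_right (Tmin a)))))"
proof -
  have A: "\<forall>a. Tm \<bar>a\<bar> < 0" using per_a by blast
  have B: "\<forall>a. (\<exists>g1 g3. hmaxsol a g1 g3 {Tm \<bar>a\<bar><..}) \<and>
      (\<forall>g1 g3 I. hmaxsol a g1 g3 I \<longrightarrow>
          I = {Tm \<bar>a\<bar><..} \<and>
          (g1 \<longlongrightarrow> 0) (at_right (Tm \<bar>a\<bar>)) \<and>
          (\<bar>a\<bar> < 1 \<longrightarrow> filterlim g3 at_top (at_right (Tm \<bar>a\<bar>))) \<and>
          (\<bar>a\<bar> = 1 \<longrightarrow> (g3 \<longlongrightarrow> 1) (at_right (Tm \<bar>a\<bar>))) \<and>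
          (\<bar>a\<bar> > 1 \<longrightarrow> (g3 \<longlongrightarrow> 0) (at_right (Tm \<bar>a\<bar>))))"
    using main_a by blast
  have C: "Tm \<bar>0\<bar> = - 1/3" unfolding Tm_def by simp
  have D: "\<forall>a. Tm \<bar>- a\<bar> = Tm \<bar>a\<bar>" by simp
  show ?thesis
    apply (rule exI[of _ "\<lambda>a. Tm \<bar>a\<bar>"])
    using A B C D by blast
qed


end
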